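(* (i) For every $n\ge 0$ and $i\in\{0,1\}$, $v_n(x,i)$ is concave in $x$, i.e. $\Delta_n(x,i)\le\Delta_n(x+1,i)$ for all $x\ge0$. (ii) For every $n\ge0$, with $B^s_n=1+T_{\Delta_n(\cdot,0)}(c/\delta)$ and $B^d_{n+1}=T_{\Delta_{n+1}(\cdot,0)}(R)$, the optimal decisions satisfy $a^s_{n+1}(0)=l$; for $x>0$, $a^s_{n+1}(x)=l$ if $x\le B^s_n$ and $a^s_{n+1}(x)=h$ if $x>B^s_n$; and for $x\ge 0$, $a^d_{n+1}(x)=1$ if $x\le B^d_{n+1}$ and $a^d_{n+1}(x)=0$ if $x>B^d_{n+1}$.
   Context: Parameters: $\lambda>0$, $0<\mu_l<\mu_h$, $\delta=\mu_h-\mu_l$, $R\ge 0$, $c>0$, and $h:\{0,1,2,\dots\}\to\mathbb{R}$ nondecreasing and convex with $h(0)=0$; the rates are normalized so that $\lambda+\mu_h+\beta=1$ for a discount rate $\beta>0$. Finite-horizon value functions on $S=\{0,1,2,\dots\}\times\{0,1\}$: $v_0\equiv 0$ and for $n\ge 0$: $v_{n+1}(0,0)=\lambda v_n(0,1)+\mu_h v_n(0,0)$; $v_{n+1}(x,0)=-h(x)+\lambda v_n(x,1)+\mu_l v_n(x-1,0)+\max\{\delta v_n(x,0),-c+\delta v_n(x-1,0)\}$ for $x\ge1$; $v_{n+1}(x,1)=\max\{R+v_{n+1}(x+1,0),v_{n+1}(x,0)\}$ for $x\ge 0$. Define $\Delta_n(x,i)=v_n(x,i)-v_n(x+1,i)$.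 Optimal decisions with $n+1$ steps remaining: admission decision in state $(x,1)$, $x\ge0$: $a^d_{n+1}(x)=1$ (admit) if $\Delta_{n+1}(x,0)\le R$ and $0$ (reject) otherwise; service-rate decision in state $(x,0)$: $a^s_{n+1}(0)=l$, and for $x>0$, $a^s_{n+1}(x)=l$ (low rate $\mu_l$) if $\Delta_n(x-1,0)\le c/\delta$ and $h$ (high rate $\mu_h$) otherwise. Threshold function: for $f:\{0,1,2,\dots\}\to\mathbb{R}$ and $\theta\in\mathbb{R}$, $T_f(\theta)=\sup\{k\ge0: f(k)\le\theta\}$, with $\sup\emptyset=-1$ (the value $+\infty$ is allowed). *)

theory Defs
  imports "HOL-Analysis.Analysis"
begin

(* State (x,i): x :: nat queue length, i :: nat in {0,1} (1 = an arrival is waiting).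
   Parameters: lam = lambda, mul = mu_l, muh = mu_h, c, R, h. delta = muh - mul. *)

fun vzero :: "real \<Rightarrow> real \<Rightarrow> real \<Rightarrow> real \<Rightarrow> real \<Rightarrow> (nat \<Rightarrow> real) \<Rightarrow> nat \<Rightarrow> nat \<Rightarrow> real" where
  "vzero lam mul muh c R h 0 x = 0"
| "vzero lam mul muh c R h (Suc n) 0 =
     lam * (if n = 0 then 0 else max (R + vzero lam mul muh c R h n 1) (vzero lam mul muh c R h n 0))
     + muh * vzero lam mul muh c R h n 0"
| "vzero lam mul muh c R h (Suc n) (Suc x) =
     - h (Suc x)
     + lam * (if n = 0 then 0 else max (R + vzero lam mul muh c R h n (Suc (Suc x))) (vzero lam mul muh c R h n (Suc x)))
     + mul * vzero lam mul muh c R h n x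
     + max ((muh - mul) * vzero lam mul muh c R h n (Suc x)) (- c + (muh - mul) * vzero lam mul muh c R h n x)"

definition vfun :: "real \<Rightarrow> real \<Rightarrow> real \<Rightarrow> real \<Rightarrow> real \<Rightarrow> (nat \<Rightarrow> real) \<Rightarrow> nat \<Rightarrow> nat \<Rightarrow> nat \<Rightarrow> real" where
  "vfun lam mul muh c R h n x i =
     (if i = 0 then vzero lam mul muh c R h n x
      else if n = 0 then 0
      else max (R + vzero lam mul muh c R h n (Suc x)) (vzero lam mul muh c R h n x))"

definition Delta :: "real \<Rightarrow> real \<Rightarrow> real \<Rightarrow> real \<Rightarrow> real \<Rightarrow> (nat \<Rightarrow> real) \<Rightarrow> nat \<Rightarrow> nat \<Rightarrow> nat \<Rightarrow> real" where
  "Delta lam mul muh c R h n x i = vfun lam mul muh c R h n x i - vfun lam mul muh c R h n (Suc x) i"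

definition Thr :: "(nat \<Rightarrow> real) \<Rightarrow> real \<Rightarrow> ereal" where
  "Thr f \<theta> = (if {k. f k \<le> \<theta>} = {} then -1 else Sup ((\<lambda>k. ereal (real k)) ` {k. f k \<le> \<theta>}))"

datatype srate = Low | High

(* service-rate decision a^s_{n+1}(x) (argument m = n+1) *)
fun a_s :: "real \<Rightarrow> real \<Rightarrow> real \<Rightarrow> real \<Rightarrow> real \<Rightarrow> (nat \<Rightarrow> real) \<Rightarrow> nat \<Rightarrow> nat \<Rightarrow> srate" where
  "a_s lam mul muh c R h m 0 = Low"
| "a_s lam mul muh c R h m (Suc x) =
     (if Delta lam mul muh c R h (m - 1) x 0 \<le> c / (muh - mul) then Low else High)"

(* admission decision a^d_m(x): 1 = admit, 0 = reject *)
definition a_d :: "real \<Rightarrow> real \<Rightarrow> real \<Rightarrow> real \<Rightarrow> real \<Rightarrow> (nat \<Rightarrow> real) \<Rightarrow> nat \<Rightarrow> nat \<Rightarrow> nat" where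
  "a_d lam mul muh c R h m x = (if Delta lam mul muh c R h m x 0 \<le> R then 1 else 0)"

end

theory Submission
  imports Defs
begin

definition conc :: "(nat \<Rightarrow> real) \<Rightarrow> bool" where
  "conc f \<longleftrightarrow> (\<forall>x. f x - f (Suc x) \<le> f (Suc x) - f (Suc (Suc x)))"
definition dec :: "(nat \<Rightarrow> real) \<Rightarrow> bool" where
  "dec f \<longleftrightarrow> (\<forall>x. f (Suc x) \<le> f x)"

lemma cd_add: "conc f \<Longrightarrow> conc g \<Longrightarrow> dec f \<Longrightarrow> dec g \<Longrightarrow> conc (\<lambda>x. f x + g x) \<and> dec (\<lambda>x. f x + g x)"
  unfolding conc_def dec_def by (smt (verit))

lemma cd_scale: assumes "a \<ge> 0" "conc f" "dec f" shows "conc (\<lambda>x. a * f x) \<and> dec (\<lambda>x. a * f x)"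
proof -
  have "a * (f x - f (Suc x)) \<le> a * (f (Suc x) - f (Suc (Suc x)))" for x
    using assms by (intro mult_left_mono) (auto simp: conc_def)
  moreover have "a * f (Suc x) \<le> a * f x" for x
    using assms by (intro mult_left_mono) (auto simp: dec_def)
  ultimately show ?thesis unfolding conc_def dec_def by (simp add: algebra_simps)
qed

lemma cd_zero: "conc (\<lambda>x. 0) \<and> dec (\<lambda>x. 0)" by (simp add: conc_def dec_def)

lemma adm_real: fixes a b c d R :: real
  assumes "a - b \<le> b - c" "b - c \<le> c - d" "b \<le> a" "c \<le> b" "d \<le> c" "R \<ge> 0"
  shows "max (R + b) a - max (R + c) b \<le> max (R + c) b - max (R + d) c"
  using assms by (smt (verit))
lemma w1_real: fixes a b c d e :: real
  assumes "a - b \<le> b - c" "b - c \<le> c - d" "b \<le> a" "c \<le> b" "d \<le> c" "e \<ge> 0"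
  shows "max b (-e + a) - max c (-e + b) \<le> max c (-e + b) - max d (-e+c)"
  using assms by (smt (verit))
lemma w0_real: fixes a b c e :: real
  assumes "a - b \<le> b - c" "b \<le> a" "c \<le> b" "e \<ge> 0"
  shows "a - max b (-e + a) \<le> max b (-e + a) - max c (-e+b)"
  using assms by (smt (verit))

lemma cd_adm: assumes "conc f" "dec f" "R \<ge> (0::real)"
  shows "conc (\<lambda>x. max (R + f (Suc x)) (f x)) \<and> dec (\<lambda>x. max (R + f (Suc x)) (f x))"
proof -
  have c: "f x - f (Suc x) \<le> f (Suc x) - f (Suc (Suc x))" for x using assms by (simp add: conc_def)
  have d: "f (Suc x) \<le> f x" for x using assms by (simp add: dec_def)
  show ?thesis unfolding conc_def dec_def
  proof (intro conjI allI)
    fix x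
    show "max (R + f (Suc x)) (f x) - max (R + f (Suc (Suc x))) (f (Suc x))
          \<le> max (R + f (Suc (Suc x))) (f (Suc x)) - max (R + f (Suc (Suc (Suc x)))) (f (Suc (Suc x)))"
      by (rule adm_real[OF c[of x] c[of "Suc x"] d[of x] d[of "Suc x"] d[of "Suc (Suc x)"] assms(3)])
    show "max (R + f (Suc (Suc x))) (f (Suc x)) \<le> max (R + f (Suc x)) (f x)"
      using d[of x] d[of "Suc x"] by (simp add: max_def)
  qed
qed

fun wfun :: "real \<Rightarrow> (nat \<Rightarrow> real) \<Rightarrow> nat \<Rightarrow> real" where
  "wfun c F 0 = F 0"
| "wfun c F (Suc x) = max (F (Suc x)) (- c + F x)"

lemma cd_w: assumes "conc F" "dec F" "c \<ge> (0::real)"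
  shows "conc (wfun c F) \<and> dec (wfun c F)"
proof -
  have c: "F x - F (Suc x) \<le> F (Suc x) - F (Suc (Suc x))" for x using assms by (simp add: conc_def)
  have d: "F (Suc x) \<le> F x" for x using assms by (simp add: dec_def)
  show ?thesis unfolding conc_def dec_def
  proof (intro conjI allI)
    fix x
    show "wfun c F x - wfun c F (Suc x) \<le> wfun c F (Suc x) - wfun c F (Suc (Suc x))"
    proof (cases x)
      case 0 then show ?thesis
        using w0_real[OF c[of 0] d[of 0] d[of "Suc 0"] assms(3)] by simp
    next
      case (Suc y) then show ?thesis
        using w1_real[OF c[of y] c[of "Suc y"] d[of y] d[of "Suc y"] d[of "Suc (Suc y)"] assms(3)] by simp
    qed
    show "wfun c F (Suc x) \<le> wfun c F x"
    proof (cases x)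
      case 0 then show ?thesis using d[of 0] assms(3) by simp
    next
      case (Suc y) then show ?thesis using d[of y] d[of "Suc y"] assms(3) by (simp add: le_max_iff_disj)
    qed
  qed
qed

lemma cd_shift: assumes "conc f" "dec f"
  shows "conc (\<lambda>x. f (x - 1)) \<and> dec (\<lambda>x. f (x - 1))"
proof -
  have c: "f x - f (Suc x) \<le> f (Suc x) - f (Suc (Suc x))" for x using assms by (simp add: conc_def)
  have d: "f (Suc x) \<le> f x" for x using assms by (simp add: dec_def)
  show ?thesis unfolding conc_def dec_def
  proof (intro conjI allI)
    fix x
    show "f (x - 1) - f (Suc x - 1) \<le> f (Suc x - 1) - f (Suc (Suc x) - 1)"
      using c d[of 0] by (cases x) simp_all
    show "f (Suc x - 1) \<le> f (x - 1)"
      using d by (cases x) simp_all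
  qed
qed

lemma cd_h: assumes "mono h" "\<And>x. h (Suc x) - h x \<le> h (Suc (Suc x)) - h (Suc x)"
  shows "conc (\<lambda>x. - h x) \<and> dec (\<lambda>x. - (h x :: real))"
proof -
  have "h x \<le> h (Suc x)" for x using assms(1) by (simp add: mono_def)
  then show ?thesis unfolding conc_def dec_def using assms(2) by (simp add: algebra_simps)
qed

lemma cd_main:
  fixes lam mul muh c R :: real and h :: "nat \<Rightarrow> real"
  assumes "lam > 0" and "0 < mul" and "mul < muh" and "R \<ge> 0" and "c > 0"
    and "mono h" and "\<And>x. h (Suc x) - h x \<le> h (Suc (Suc x)) - h (Suc x)" and "h 0 = 0"
  shows "conc (vzero lam mul muh c R h n) \<and> dec (vzero lam mul muh c R h n)"
proof (induction n)
  case 0 then show ?case by (simp add: conc_def dec_def)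
next
  case (Suc n)
  let ?f = "vzero lam mul muh c R h n"
  define G where "G = (\<lambda>x. if n = 0 then 0 else max (R + ?f (Suc x)) (?f x))"
  have eq: "vzero lam mul muh c R h (Suc n) = (\<lambda>x. (- h x + lam * G x) + (mul * ?f (x - 1) + wfun c (\<lambda>y. (muh - mul) * ?f y) x))"
  proof
    fix x show "vzero lam mul muh c R h (Suc n) x = (- h x + lam * G x) + (mul * ?f (x - 1) + wfun c (\<lambda>y. (muh - mul) * ?f y) x)"
      by (cases x) (simp_all add: G_def assms(8) algebra_simps)
  qed
  have G: "conc G \<and> dec G"
    using cd_adm[of ?f R] Suc assms(4) cd_zero by (cases "n = 0") (auto simp: G_def)
  have H: "conc (\<lambda>x. - h x) \<and> dec (\<lambda>x. - h x)" using cd_h assms by blast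
  have lG: "conc (\<lambda>x. lam * G x) \<and> dec (\<lambda>x. lam * G x)" using cd_scale[of lam G] G assms by auto
  have S: "conc (\<lambda>x. mul * ?f (x - 1)) \<and> dec (\<lambda>x. mul * ?f (x - 1))"
    using cd_shift[of ?f] Suc cd_scale[of mul "\<lambda>x. ?f (x - 1)"] assms by auto
  have F: "conc (\<lambda>y. (muh - mul) * ?f y) \<and> dec (\<lambda>y. (muh - mul) * ?f y)"
    using cd_scale[of "muh - mul" ?f] Suc assms by auto
  have W: "conc (wfun c (\<lambda>y. (muh - mul) * ?f y)) \<and> dec (wfun c (\<lambda>y. (muh - mul) * ?f y))"
    using cd_w F assms(5) by auto
  have A: "conc (\<lambda>x. - h x + lam * G x) \<and> dec (\<lambda>x. - h x + lam * G x)"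
    using cd_add H lG by blast
  have B: "conc (\<lambda>x. mul * ?f (x - 1) + wfun c (\<lambda>y. (muh - mul) * ?f y) x) \<and>
           dec (\<lambda>x. mul * ?f (x - 1) + wfun c (\<lambda>y. (muh - mul) * ?f y) x)"
    using cd_add[OF _ _ _ _] S W by blast
  show ?case unfolding eq using cd_add[of "\<lambda>x. - h x + lam * G x"] A B by blast
qed

lemma thr_iff:
  fixes D :: "nat \<Rightarrow> real"
  assumes "mono D"
  shows "ereal (real x) \<le> Thr D \<theta> \<longleftrightarrow> D x \<le> \<theta>"
proof
  assume "D x \<le> \<theta>"
  then have "x \<in> {k. D k \<le> \<theta>}" by simp
  then show "ereal (real x) \<le> Thr D \<theta>"
    unfolding Thr_def by (auto intro: SUP_upper)
next
  assume a: "ereal (real x) \<le> Thr D \<theta>"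
  show "D x \<le> \<theta>"
  proof (rule ccontr)
    assume n: "\<not> D x \<le> \<theta>"
    have lt: "k < x" if "D k \<le> \<theta>" for k
    proof (rule ccontr)
      assume "\<not> k < x"
      then have "D x \<le> D k" using assms by (simp add: mono_def)
      with that n show False by simp
    qed
    show False
    proof (cases "{k. D k \<le> \<theta>} = {}")
      case True
      then have "ereal (real x) \<le> ereal (-1)" using a by (simp add: Thr_def one_ereal_def)
      then show False by simp
    next
      case False
      have "Sup ((\<lambda>k. ereal (real k)) ` {k. D k \<le> \<theta>}) \<le> ereal (real x - 1)"
        by (rule SUP_least) (use lt in force)
      moreover have "Thr D \<theta> = Sup ((\<lambda>k. ereal (real k)) ` {k. D k \<le> \<theta>})"
        using False unfolding Thr_def by (rule if_not_P)
      ultimately have "ereal (real x) \<le> ereal (real x - 1)" using a order_trans by metis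
      then show False by simp
    qed
  qed
qed

theorem theorem2:
  fixes lam mul muh c R beta :: real and h :: "nat \<Rightarrow> real"
  assumes "lam > 0" and "0 < mul" and "mul < muh" and "R \<ge> 0" and "c > 0"
    and "beta > 0" and "lam + muh + beta = 1"
    and "mono h" and "\<And>x. h (Suc x) - h x \<le> h (Suc (Suc x)) - h (Suc x)" and "h 0 = 0"
  shows "(\<forall>n x i. i \<in> {0, 1} \<longrightarrow>
            Delta lam mul muh c R h n x i \<le> Delta lam mul muh c R h n (Suc x) i)
       \<and> (\<forall>n.
            let Bs = 1 + Thr (\<lambda>x. Delta lam mul muh c R h n x 0) (c / (muh - mul));
                Bd = Thr (\<lambda>x. Delta lam mul muh c R h (Suc n) x 0) R
            in a_s lam mul muh c R h (Suc n) 0 = Low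
             \<and> (\<forall>x > 0. (ereal (real x) \<le> Bs \<longrightarrow> a_s lam mul muh c R h (Suc n) x = Low)
                       \<and> (ereal (real x) > Bs \<longrightarrow> a_s lam mul muh c R h (Suc n) x = High))
             \<and> (\<forall>x. (ereal (real x) \<le> Bd \<longrightarrow> a_d lam mul muh c R h (Suc n) x = 1)
                   \<and> (ereal (real x) > Bd \<longrightarrow> a_d lam mul muh c R h (Suc n) x = 0)))"
proof -
  note M = cd_main[OF assms(1-5) assms(8-10)]
  have D0: "Delta lam mul muh c R h n x 0 \<le> Delta lam mul muh c R h n (Suc x) 0" for n x
    using M[of n] by (simp add: Delta_def vfun_def conc_def)
  have D1: "Delta lam mul muh c R h n x 1 \<le> Delta lam mul muh c R h n (Suc x) 1" for n x
  proof (cases "n = 0")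
    case True then show ?thesis by (simp add: Delta_def vfun_def)
  next
    case False
    have "conc (\<lambda>x. max (R + vzero lam mul muh c R h n (Suc x)) (vzero lam mul muh c R h n x))"
      using cd_adm M[of n] assms(4) by blast
    then show ?thesis using False by (simp add: Delta_def vfun_def conc_def)
  qed
  have mono: "mono (\<lambda>x. Delta lam mul muh c R h n x 0)" for n
    using D0 by (intro monoI) (rule lift_Suc_mono_le[of "\<lambda>x. Delta lam mul muh c R h n x 0"], auto)
  have part1: "\<forall>n x i. i \<in> {0, 1} \<longrightarrow>
            Delta lam mul muh c R h n x i \<le> Delta lam mul muh c R h n (Suc x) i"
    using D0 D1 by auto
  have ee: "(1 + ereal (real y) \<le> 1 + T) \<longleftrightarrow> ereal (real y) \<le> T" for y and T :: ereal
    by (cases T) (simp_all add: one_ereal_def)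
  have part2: "let Bs = 1 + Thr (\<lambda>x. Delta lam mul muh c R h n x 0) (c / (muh - mul));
                Bd = Thr (\<lambda>x. Delta lam mul muh c R h (Suc n) x 0) R
            in a_s lam mul muh c R h (Suc n) 0 = Low
             \<and> (\<forall>x > 0. (ereal (real x) \<le> Bs \<longrightarrow> a_s lam mul muh c R h (Suc n) x = Low)
                       \<and> (ereal (real x) > Bs \<longrightarrow> a_s lam mul muh c R h (Suc n) x = High))
             \<and> (\<forall>x. (ereal (real x) \<le> Bd \<longrightarrow> a_d lam mul muh c R h (Suc n) x = 1)
                   \<and> (ereal (real x) > Bd \<longrightarrow> a_d lam mul muh c R h (Suc n) x = 0))" for n
  proof -
    let ?T = "Thr (\<lambda>x. Delta lam mul muh c R h n x 0) (c / (muh - mul))"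
    have s: "(ereal (real x) \<le> 1 + ?T) \<longleftrightarrow> a_s lam mul muh c R h (Suc n) x = Low" if x0: "x > 0" for x
    proof -
      obtain y where y: "x = Suc y" using x0 not0_implies_Suc by auto
      have xe: "ereal (real x) = 1 + ereal (real y)" using y by (simp add: one_ereal_def)
      have "(ereal (real x) \<le> 1 + ?T) \<longleftrightarrow> ereal (real y) \<le> ?T" unfolding xe by (rule ee)
      moreover have "ereal (real y) \<le> ?T \<longleftrightarrow> Delta lam mul muh c R h n y 0 \<le> c / (muh - mul)"
        by (rule thr_iff[OF mono[of n]])
      moreover have "a_s lam mul muh c R h (Suc n) x = Low \<longleftrightarrow> Delta lam mul muh c R h n y 0 \<le> c / (muh - mul)"
        unfolding y a_s.simps diff_Suc_1 by simp
      ultimately show ?thesis by blast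
    qed
    have d: "(ereal (real x) \<le> Thr (\<lambda>x. Delta lam mul muh c R h (Suc n) x 0) R) \<longleftrightarrow>
             a_d lam mul muh c R h (Suc n) x = 1" for x
      using thr_iff[OF mono[of "Suc n"]] by (simp add: a_d_def)
    have s2: "a_s lam mul muh c R h (Suc n) x = High" if "x > 0" "\<not> a_s lam mul muh c R h (Suc n) x = Low" for x
      using that by (cases "a_s lam mul muh c R h (Suc n) x") auto
    have d2: "a_d lam mul muh c R h (Suc n) x = 0" if "a_d lam mul muh c R h (Suc n) x \<noteq> 1" for x
      using that by (simp add: a_d_def split: if_splits)
    show ?thesis unfolding Let_def
    proof (intro conjI allI impI)
      show "a_s lam mul muh c R h (Suc n) 0 = Low" by simp
    next
      fix x :: nat assume "x > 0" "ereal (real x) \<le> 1 + ?T"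
      then show "a_s lam mul muh c R h (Suc n) x = Low" using s by blast
    next
      fix x :: nat assume "x > 0" "ereal (real x) > 1 + ?T"
      then show "a_s lam mul muh c R h (Suc n) x = High" using s s2 by (meson linorder_not_le)
    next
      fix x :: nat assume "ereal (real x) \<le> Thr (\<lambda>x. Delta lam mul muh c R h (Suc n) x 0) R"
      then show "a_d lam mul muh c R h (Suc n) x = 1" using d by blast
    next
      fix x :: nat assume "ereal (real x) > Thr (\<lambda>x. Delta lam mul muh c R h (Suc n) x 0) R"
      then show "a_d lam mul muh c R h (Suc n) x = 0" using d d2 by (meson linorder_not_le)
    qed
  qed
  show ?thesis using part1 part2 by blast
qed

end
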